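(* Let $N\ge 2$ be an even integer, $0<\varepsilon\le N^{-1}$, $\alpha>0$, $\sigma>0$, and let $\varphi$ be as described in the context, with $\psi=e^{-\varphi}$ and $\max|\psi'|:=\max_{t\in[0,1/2]}|\psi'(t)|$. Let $x_0<x_1<\dots<x_N$ be the layer-adapted mesh described in the context and $h_i=x_i-x_{i-1}$. For $i=N/2+1,\dots,N$ put $$\Theta_i=\min\Big\{\frac{h_i}{\varepsilon},1\Big\}\,e^{-\alpha(1-x_i)/(\sigma\varepsilon)}.$$ Then there is a constant $C>0$ independent of $\varepsilon$ and $N$ such that $$\max_{N/2+1\le i\le N}\Theta_i\le C N^{-1}\max|\psi'| ,\qquad \sum_{i=N/2+1}^{N}\Theta_i\le C .$$
   Context: Layer-adapted mesh on $[0,1]$: let $\varphi:[0,1/2]\to\mathbb R$ be smooth with $\varphi(0)=0$, $\varphi'>0$, $\varphi''\ge 0$. Set $\tau=\frac{\sigma\varepsilon}{\alpha}\varphi(1/2)$ and assume $\tau\le 1/2$. The mesh points are $x_i=\lambda(i/N)$, $i=0,\dots,N$, where $\lambda(t)=2(1-\tau)t$ for $t\in[0,1/2]$ and $\lambda(t)=1-\frac{\sigma\varepsilon}{\alpha}\varphi(1-t)$ for $t\in[1/2,1]$. Thus the mesh is uniform on $[0,1-\tau]$ with $N/2$ cells and graded on $[1-\tau,1]$ with $N/2$ cells. *)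

theory Defs
  imports "HOL-Analysis.Analysis"
begin

definition smooth_with_derivs :: "(nat \<Rightarrow> real \<Rightarrow> real) \<Rightarrow> (real \<Rightarrow> real) \<Rightarrow> real set \<Rightarrow> bool" where
  "smooth_with_derivs D f S \<longleftrightarrow>
     (\<forall>t\<in>S. D 0 t = f t) \<and>
     (\<forall>k. \<forall>t\<in>S. (D k has_real_derivative D (Suc k) t) (at t within S))"

definition mesh_tau :: "real \<Rightarrow> real \<Rightarrow> real \<Rightarrow> (real \<Rightarrow> real) \<Rightarrow> real" where
  "mesh_tau \<sigma> \<epsilon> \<alpha> \<phi> = \<sigma> * \<epsilon> / \<alpha> * \<phi> (1/2)"

definition mesh_lambda :: "real \<Rightarrow> real \<Rightarrow> real \<Rightarrow> (real \<Rightarrow> real) \<Rightarrow> real \<Rightarrow> real" where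
  "mesh_lambda \<sigma> \<epsilon> \<alpha> \<phi> t =
     (if t \<le> 1/2 then 2 * (1 - mesh_tau \<sigma> \<epsilon> \<alpha> \<phi>) * t
      else 1 - \<sigma> * \<epsilon> / \<alpha> * \<phi> (1 - t))"

definition mesh_x :: "real \<Rightarrow> real \<Rightarrow> real \<Rightarrow> (real \<Rightarrow> real) \<Rightarrow> nat \<Rightarrow> nat \<Rightarrow> real" where
  "mesh_x \<sigma> \<epsilon> \<alpha> \<phi> N i = mesh_lambda \<sigma> \<epsilon> \<alpha> \<phi> (real i / real N)"

definition mesh_Theta :: "real \<Rightarrow> real \<Rightarrow> real \<Rightarrow> (real \<Rightarrow> real) \<Rightarrow> nat \<Rightarrow> nat \<Rightarrow> real" where
  "mesh_Theta \<sigma> \<epsilon> \<alpha> \<phi> N i =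
     min ((mesh_x \<sigma> \<epsilon> \<alpha> \<phi> N i - mesh_x \<sigma> \<epsilon> \<alpha> \<phi> N (i - 1)) / \<epsilon>) 1
     * exp (- \<alpha> * (1 - mesh_x \<sigma> \<epsilon> \<alpha> \<phi> N i) / (\<sigma> * \<epsilon>))"

end

theory Submission
  imports Defs
begin

lemma key_ineq:
  fixes c d :: real assumes "c > 0" "d \<ge> 0"
  shows "min (c*d) 1 \<le> 2 * max c 1 * (1 - exp (-d))"
proof -
  have e: "1 + d \<le> exp d" by (rule exp_ge_add_one_self)
  have ex: "exp (-d) = 1 / exp d" by (simp add: exp_minus field_simps)
  have h: "min d 1 \<le> 2 * (1 - exp (-d))"
  proof (cases "d \<le> 1")
    case True
    have "1 - exp(-d) \<ge> 1 - 1/(1+d)" unfolding ex using e assms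
      by (simp add: frac_le)
    moreover have "1 - 1/(1+d) = d/(1+d)" using assms by (simp add: field_simps)
    moreover have "d/(1+d) \<ge> d/2" using assms True by (intro divide_left_mono) auto
    ultimately have "d/2 \<le> 1 - exp(-d)" by linarith
    thus ?thesis using True by (simp add: min_def)
  next
    case False
    have "exp d \<ge> 2" using e False by linarith
    hence "1 / exp d \<le> 1/2" by (simp add: frac_le)
    thus ?thesis using False ex by auto
  qed
  have "min (c*d) 1 \<le> max c 1 * min d 1" using assms
    using mult_right_mono[of c 1 d] mult_mono[of c 1 d 1] less_1_mult[of c d] mult_left_mono[of 1 d c]
    by (cases "d \<le> 1"; cases "c \<le> 1"; auto simp: min_def max_def)
  also have "\<dots> \<le> max c 1 * (2 * (1 - exp (-d)))" using h by (intro mult_left_mono) auto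
  finally show ?thesis by (simp add: algebra_simps)
qed

lemma telesc:
  fixes f :: "nat \<Rightarrow> real"
  shows "m \<le> n \<Longrightarrow> (\<Sum>i=Suc m..n. f i - f (i-1)) = f n - f m"
proof (induction n)
  case 0 then show ?case by simp
next
  case (Suc n)
  show ?case
  proof (cases "m = Suc n")
    case True then show ?thesis by simp
  next
    case False
    then have "m \<le> n" using Suc by simp
    then show ?thesis using Suc by (simp add: sum.cl_ivl_Suc)
  qed
qed

theorem lemma1:
  fixes \<alpha> \<sigma> :: real and \<phi> \<psi>' :: "real \<Rightarrow> real" and D :: "nat \<Rightarrow> real \<Rightarrow> real"
  assumes "\<alpha> > 0" and "\<sigma> > 0"
    and "smooth_with_derivs D \<phi> {0..1/2}"
    and "\<phi> 0 = 0"
    and "\<forall>t\<in>{0..1/2}. D 1 t > 0"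
    and "\<forall>t\<in>{0..1/2}. D 2 t \<ge> 0"
    and "\<forall>t\<in>{0..1/2}. ((\<lambda>s. exp (- \<phi> s)) has_real_derivative \<psi>' t) (at t within {0..1/2})"
  shows "\<exists>C>0. \<forall>(N::nat) (\<epsilon>::real).
           N \<ge> 2 \<longrightarrow> even N \<longrightarrow> 0 < \<epsilon> \<longrightarrow> \<epsilon> \<le> 1 / real N \<longrightarrow>
           mesh_tau \<sigma> \<epsilon> \<alpha> \<phi> \<le> 1/2 \<longrightarrow>
           (\<forall>i\<in>{N div 2 + 1..N}.
              mesh_Theta \<sigma> \<epsilon> \<alpha> \<phi> N i \<le> C / real N * (SUP t\<in>{0..1/2}. \<bar>\<psi>' t\<bar>)) \<and>
           (\<Sum>i=N div 2 + 1..N. mesh_Theta \<sigma> \<epsilon> \<alpha> \<phi> N i) \<le> C"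
proof -
  define S where "S = {0..1/2::real}"
  have sm: "\<forall>t\<in>S. D 0 t = \<phi> t" "\<forall>k. \<forall>t\<in>S. (D k has_real_derivative D (Suc k) t) (at t within S)"
    using assms(3) unfolding smooth_with_derivs_def S_def by auto
  have phi_der: "(\<phi> has_real_derivative D 1 t) (at t within S)" if "t \<in> S" for t
  proof -
    have "(D 0 has_real_derivative D (Suc 0) t) (at t within S)" using sm(2) that by blast
    from has_field_derivative_transform_within[OF this zero_less_one that] sm(1) that
    show ?thesis by simp
  qed
  have D1cont: "continuous_on S (D 1)"
    using sm(2) by (intro DERIV_continuous_on) (auto simp: numeral_2_eq_2)
  have phicont: "continuous_on S \<phi>"
    using phi_der by (intro DERIV_continuous_on) auto
  have psi_der2: "((\<lambda>s. exp (- \<phi> s)) has_real_derivative (exp (- \<phi> t) * (- D 1 t))) (at t within S)"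
    if "t \<in> S" for t
    using phi_der[OF that] by (auto intro!: derivative_eq_intros)
  have nbot: "at t within S \<noteq> bot" if "t \<in> S" for t
    using that unfolding S_def trivial_limit_within
    by (auto simp: islimpt_Icc)
  have psi'_eq: "\<psi>' t = exp (- \<phi> t) * (- D 1 t)" if "t \<in> S" for t
    using has_field_derivative_unique[OF assms(7)[rule_format, of t, folded S_def] psi_der2 nbot] that
    unfolding S_def by auto
  have gcont: "continuous_on S (\<lambda>t. \<bar>exp (- \<phi> t) * (- D 1 t)\<bar>)"
    by (intro continuous_intros D1cont phicont)
  have "compact ((\<lambda>t. \<bar>exp (- \<phi> t) * (- D 1 t)\<bar>) ` S)"
    by (intro compact_continuous_image gcont) (simp add: S_def)
  hence "bdd_above ((\<lambda>t. \<bar>exp (- \<phi> t) * (- D 1 t)\<bar>) ` S)"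
    by (intro bounded_imp_bdd_above compact_imp_bounded)
  moreover have "(\<lambda>t. \<bar>\<psi>' t\<bar>) ` S = (\<lambda>t. \<bar>exp (- \<phi> t) * (- D 1 t)\<bar>) ` S"
    using psi'_eq by (intro image_cong) auto
  ultimately have bdd: "bdd_above ((\<lambda>t. \<bar>\<psi>' t\<bar>) ` S)" by simp
  define M where "M = (SUP t\<in>{0..1/2}. \<bar>\<psi>' t\<bar>)"
  have Mup: "\<bar>\<psi>' t\<bar> \<le> M" if "t \<in> S" for t
    unfolding M_def using cSUP_upper[OF that bdd] by (simp add: S_def)
  have psi_mvt: "exp (- \<phi> a) - exp (- \<phi> b) \<le> (b - a) * M" if "0 \<le> a" "a < b" "b \<le> 1/2" for a b
  proof -
    have "\<exists>x\<in>{a<..<b}. exp (- \<phi> b) - exp (- \<phi> a) = (\<lambda>h. \<psi>' x * h) (b - a)"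
    proof (rule mvt_simple[OF that(2)])
      fix x assume "a \<le> x" "x \<le> b"
      hence "x \<in> S" using that unfolding S_def by auto
      hence "((\<lambda>s. exp (- \<phi> s)) has_real_derivative \<psi>' x) (at x within {a..b})"
        using assms(7) that unfolding S_def
        by (meson \<open>x \<in> S\<close>[unfolded S_def] atLeastatMost_subset_iff has_field_derivative_subset order.refl)
      thus "((\<lambda>s. exp (- \<phi> s)) has_derivative (\<lambda>h. \<psi>' x * h)) (at x within {a..b})"
        by (simp add: has_field_derivative_def)
    qed
    then obtain x where x: "a < x" "x < b" "exp (- \<phi> b) - exp (- \<phi> a) = \<psi>' x * (b - a)" by auto
    have "x \<in> S" using x that unfolding S_def by auto
    have "exp (- \<phi> a) - exp (- \<phi> b) \<le> \<bar>\<psi>' x\<bar> * (b - a)"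
    proof -
      have "exp (- \<phi> a) - exp (- \<phi> b) = - \<psi>' x * (b - a)" using x(3) by simp
      also have "\<dots> \<le> \<bar>\<psi>' x\<bar> * (b - a)" using x by (intro mult_right_mono) auto
      finally show ?thesis .
    qed
    also have "\<dots> \<le> M * (b - a)" using Mup[OF \<open>x \<in> S\<close>] x by (intro mult_right_mono) auto
    finally show ?thesis by (simp add: mult.commute)
  qed
  have phi_mono: "\<phi> a \<le> \<phi> b" if "0 \<le> a" "a \<le> b" "b \<le> 1/2" for a b
  proof (cases "a = b")
    case True then show ?thesis by simp
  next
    case False
    hence ab: "a < b" using that by simp
    have "\<exists>x\<in>{a<..<b}. \<phi> b - \<phi> a = (\<lambda>h. D 1 x * h) (b - a)"
    proof (rule mvt_simple[OF ab])
      fix x assume "a \<le> x" "x \<le> b"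
      hence xS: "x \<in> S" using that unfolding S_def by auto
      have "{a..b} \<subseteq> S" using that unfolding S_def by auto
      hence "(\<phi> has_real_derivative D 1 x) (at x within {a..b})"
        using phi_der[OF xS] has_field_derivative_subset by blast
      thus "(\<phi> has_derivative (\<lambda>h. D 1 x * h)) (at x within {a..b})"
        by (simp add: has_field_derivative_def)
    qed
    then obtain x where x: "a < x" "x < b" "\<phi> b - \<phi> a = D 1 x * (b - a)" by auto
    have "x \<in> S" using x that unfolding S_def by auto
    hence "D 1 x > 0" using assms(5) unfolding S_def by auto
    hence "D 1 x * (b - a) \<ge> 0" using x by simp
    thus ?thesis using x(3) by simp
  qed
  define C where "C = 2 * max (\<sigma>/\<alpha>) 1"
  have Cpos: "C > 0" unfolding C_def by auto
  show ?thesis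
  proof (intro exI[of _ C] conjI Cpos allI impI)
    fix N :: nat and \<epsilon> :: real
    assume N2: "N \<ge> 2" and ev: "even N" and ep: "0 < \<epsilon>" and "\<epsilon> \<le> 1 / real N"
      and "mesh_tau \<sigma> \<epsilon> \<alpha> \<phi> \<le> 1/2"
    define f where "f = (\<lambda>j::nat. exp (- \<phi> (1 - real j / real N)))"
    have Npos: "real N > 0" using N2 by simp
    have half: "real (N div 2) / real N = 1/2" using ev N2 by (auto elim!: evenE)
    have xform: "mesh_x \<sigma> \<epsilon> \<alpha> \<phi> N j = 1 - \<sigma> * \<epsilon> / \<alpha> * \<phi> (1 - real j / real N)"
      if "N div 2 \<le> j" for j
    proof (cases "j = N div 2")
      case True
      then show ?thesis unfolding mesh_x_def mesh_lambda_def mesh_tau_def using half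
        by (simp add: algebra_simps)
    next
      case False
      hence "N div 2 < j" using that by simp
      hence "real j / real N > 1/2" using ev Npos by (auto elim!: evenE simp: field_simps)
      then show ?thesis unfolding mesh_x_def mesh_lambda_def by simp
    qed
    have thb: "mesh_Theta \<sigma> \<epsilon> \<alpha> \<phi> N i \<le> C * (f i - f (i - 1))"
      if i: "i \<in> {N div 2 + 1..N}" for i
    proof -
      define a where "a = 1 - real i / real N"
      define b where "b = 1 - real (i - 1) / real N"
      have i1: "real (i - 1) = real i - 1" using i by auto
      have ab: "b - a = 1 / real N" unfolding a_def b_def i1 using Npos by (simp add: field_simps)
      have a0: "0 \<le> a" unfolding a_def using i Npos by (auto simp: field_simps)
      have b12: "b \<le> 1/2"
      proof -
        have "real (N div 2) \<le> real (i - 1)" using i by auto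
        hence "real (N div 2) / real N \<le> real (i - 1) / real N" using Npos by (intro divide_right_mono) auto
        thus ?thesis unfolding b_def using half by simp
      qed
      have d0: "\<phi> b - \<phi> a \<ge> 0" proof -
        have "1 / real N > 0" using Npos by simp
        hence "a \<le> b" using ab by linarith
        thus ?thesis using phi_mono[OF a0 _ b12] by simp
      qed
      have e1: "(mesh_x \<sigma> \<epsilon> \<alpha> \<phi> N i - mesh_x \<sigma> \<epsilon> \<alpha> \<phi> N (i - 1)) / \<epsilon> = \<sigma>/\<alpha> * (\<phi> b - \<phi> a)"
        using xform[of i] xform[of "i - 1"] i ep assms(1) unfolding a_def b_def
        by (auto simp: field_simps)
      have e2: "- \<alpha> * (1 - mesh_x \<sigma> \<epsilon> \<alpha> \<phi> N i) / (\<sigma> * \<epsilon>) = - \<phi> a"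
        using xform[of i] i ep assms(1,2) unfolding a_def by (auto simp: field_simps)
      have "mesh_Theta \<sigma> \<epsilon> \<alpha> \<phi> N i = min (\<sigma>/\<alpha> * (\<phi> b - \<phi> a)) 1 * exp (- \<phi> a)"
        unfolding mesh_Theta_def e1 e2 ..
      also have "\<dots> \<le> C * (1 - exp (- (\<phi> b - \<phi> a))) * exp (- \<phi> a)"
        unfolding C_def using key_ineq[OF _ d0, of "\<sigma>/\<alpha>"] assms(1,2)
        by (intro mult_right_mono) auto
      also have "\<dots> = C * (exp (- \<phi> a) - exp (- \<phi> b))"
      proof -
        have "exp (- (\<phi> b - \<phi> a)) * exp (- \<phi> a) = exp (- \<phi> b)"
          by (simp add: exp_add[symmetric])
        thus ?thesis by (simp add: algebra_simps)
      qed
      also have "\<dots> = C * (f i - f (i - 1))" unfolding f_def a_def b_def by simp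
      finally show ?thesis .
    qed
    show "\<forall>i\<in>{N div 2 + 1..N}. mesh_Theta \<sigma> \<epsilon> \<alpha> \<phi> N i \<le> C / real N * (SUP t\<in>{0..1/2}. \<bar>\<psi>' t\<bar>)"
    proof
      fix i assume i: "i \<in> {N div 2 + 1..N}"
      define a where "a = 1 - real i / real N"
      define b where "b = 1 - real (i - 1) / real N"
      have i1: "real (i - 1) = real i - 1" using i by auto
      have ab: "b - a = 1 / real N" unfolding a_def b_def i1 using Npos by (simp add: field_simps)
      have a0: "0 \<le> a" unfolding a_def using i Npos by (auto simp: field_simps)
      have b12: "b \<le> 1/2"
      proof -
        have "real (N div 2) \<le> real (i - 1)" using i by auto
        hence "real (N div 2) / real N \<le> real (i - 1) / real N" using Npos by (intro divide_right_mono) auto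
        thus ?thesis unfolding b_def using half by simp
      qed
      have "f i - f (i - 1) \<le> (b - a) * M"
      proof -
        have "1 / real N > 0" using Npos by simp
        hence "a < b" using ab by linarith
        moreover have "f i = exp (- \<phi> a)" "f (i - 1) = exp (- \<phi> b)"
          unfolding f_def a_def b_def by simp_all
        ultimately show ?thesis using psi_mvt[OF a0 _ b12] by simp
      qed
      hence "C * (f i - f (i - 1)) \<le> C * ((b - a) * M)" using Cpos by (intro mult_left_mono) auto
      thus "mesh_Theta \<sigma> \<epsilon> \<alpha> \<phi> N i \<le> C / real N * (SUP t\<in>{0..1/2}. \<bar>\<psi>' t\<bar>)"
        using thb[OF i] ab unfolding M_def by simp
    qed
    have "(\<Sum>i=N div 2 + 1..N. mesh_Theta \<sigma> \<epsilon> \<alpha> \<phi> N i) \<le> (\<Sum>i=N div 2 + 1..N. C * (f i - f (i - 1)))"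
      by (intro sum_mono thb)
    also have "\<dots> = C * (f N - f (N div 2))"
      using telesc[of "N div 2" N f] by (simp add: sum_distrib_left[symmetric])
    also have "\<dots> \<le> C"
    proof -
      have "f N = 1" unfolding f_def using Npos assms(4) by simp
      moreover have "f (N div 2) > 0" unfolding f_def by simp
      ultimately show ?thesis using Cpos by (simp add: mult_left_le)
    qed
    finally show "(\<Sum>i=N div 2 + 1..N. mesh_Theta \<sigma> \<epsilon> \<alpha> \<phi> N i) \<le> C" .
  qed
qed

end
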